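(* Let $X$ be a Banach lattice, $T\in(0,\infty]$, and assume: $G$ generates a $C_0$-semigroup $(S(t))_{t\ge0}$ on $X$; there is $\eta:(0,\infty)\to(0,\infty)$ with $\eta(\delta)\to0$ as $\delta\to0^+$ and $\|\int_{s_0}^{s_1}S(s_1-s)\varphi(s)\,ds\|_X\le\eta(s_1-s_0)\|\varphi\|_{C([s_0,s_1],X)}$ for all $0\le s_0<s_1$, $\varphi\in C([s_0,s_1],X)$; $F:[0,T)\times X\to X$ is continuous and satisfies a Lipschitz condition in the second argument on bounded sets, uniformly in the first argument on compact intervals; for every $\gamma\ge0$, $G-\gamma I$ generates a positive semigroup on $X$; and for every $\tau\in[0,T)$ and $r>0$ there is $\gamma\ge0$ with $F(t,v)+\gamma v\ge0$ for all $v\in X_+$ with $\|v\|\le r$ and all $t\in[0,\tau]$. Let $\phi$ be a positive bounded linear functional on $X$ with $\phi(S(t)f)\le\phi(f)$ for all $f\in X_+$, $t\ge0$. Let $\mathring u\in X_+$ and let $u$ be the unique maximal mild solution on $[0,t_{\max})$ of $u'=Gu+F(t,u)$, $u(0)=\mathring u$. Let $\tau\in(0,t_{\max})$ and $\nu(\tau)\in\mathbb R$ be such that $\phi(F(t,u(t)))\le\nu(\tau)\phi(u(t))$ for all $t\in[0,\tau]$. Then $\phi(u(t))\le\phi(\mathring u)e^{\nu(\tau)t}$ for all $t\in[0,\tau]$.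
   Context: $F$ satisfies a Lipschitz condition in the second argument on bounded sets, uniformly in the first argument on compact intervals, if for every $t'\in[0,T)$ and $r>0$ there is $L$ with $\|F(t,f)-F(t,g)\|\le L\|f-g\|$ for all $\|f\|,\|g\|\le r$ and $t\in[0,t']$. A mild solution on $[0,t_1)$ is $u\in C([0,t_1),X)$ with $u(t)=S(t)\mathring u+\int_0^tS(t-s)F(s,u(s))\,ds$; maximal means it admits no extension to a mild solution on a larger interval $[0,\tilde t_1)$, $\tilde t_1\le T$. A positive semigroup maps $X_+$ into $X_+$; a functional is positive if it is non-negative on $X_+$. *)

theory Defs
  imports "HOL-Analysis.Analysis"
begin

text \<open>Banach lattice: a complete normed vector lattice whose norm is a lattice norm,
  i.e. the modulus |x| = sup x (-x) satisfies |x| \<le> |y| implies norm x \<le> norm y.\<close>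
class banach_lattice = banach + ordered_real_vector + lattice +
  assumes lattice_norm: "sup x (- x) \<le> sup y (- y) \<Longrightarrow> norm x \<le> norm y"

text \<open>[0,T) for T in (0,\<infinity>] encoded as an extended real.\<close>
definition Ico0 :: "ereal \<Rightarrow> real set" where
  "Ico0 T = {t. 0 \<le> t \<and> ereal t < T}"

definition c0_semigroup :: "(real \<Rightarrow> 'a::real_normed_vector \<Rightarrow> 'a) \<Rightarrow> bool" where
  "c0_semigroup S \<longleftrightarrow>
     (\<forall>t\<ge>0. bounded_linear (S t)) \<and> S 0 = id \<and>
     (\<forall>t\<ge>0. \<forall>s\<ge>0. S (t + s) = S t \<circ> S s) \<and>
     (\<forall>x. continuous_on {0..} (\<lambda>t. S t x))"

definition is_generator :: "(real \<Rightarrow> 'a::real_normed_vector \<Rightarrow> 'a) \<Rightarrow> 'a set \<Rightarrow> ('a \<Rightarrow> 'a) \<Rightarrow> bool" where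
  "is_generator S D G \<longleftrightarrow>
     D = {x. \<exists>y. ((\<lambda>h. (1 / h) *\<^sub>R (S h x - x)) \<longlongrightarrow> y) (at_right 0)} \<and>
     (\<forall>x\<in>D. ((\<lambda>h. (1 / h) *\<^sub>R (S h x - x)) \<longlongrightarrow> G x) (at_right 0))"

definition generates_c0 :: "'a set \<Rightarrow> ('a \<Rightarrow> 'a) \<Rightarrow> (real \<Rightarrow> 'a::real_normed_vector \<Rightarrow> 'a) \<Rightarrow> bool" where
  "generates_c0 D G S \<longleftrightarrow> c0_semigroup S \<and> is_generator S D G"

definition positive_semigroup :: "(real \<Rightarrow> 'a::{real_normed_vector,order} \<Rightarrow> 'a) \<Rightarrow> bool" where
  "positive_semigroup S \<longleftrightarrow> (\<forall>t\<ge>0. \<forall>x. 0 \<le> x \<longrightarrow> 0 \<le> S t x)"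

definition lipschitz_bounded_uniform ::
  "ereal \<Rightarrow> (real \<Rightarrow> 'a::real_normed_vector \<Rightarrow> 'a) \<Rightarrow> bool" where
  "lipschitz_bounded_uniform T F \<longleftrightarrow>
     (\<forall>t'\<in>Ico0 T. \<forall>r>0. \<exists>L. \<forall>t\<in>{0..t'}. \<forall>f g. norm f \<le> r \<longrightarrow> norm g \<le> r \<longrightarrow>
        norm (F t f - F t g) \<le> L * norm (f - g))"

text \<open>Mild solution on [0,t1) (with t1 \<le> T so that F is defined there).\<close>
definition mild_solution ::
  "ereal \<Rightarrow> (real \<Rightarrow> 'a::banach \<Rightarrow> 'a) \<Rightarrow> (real \<Rightarrow> 'a \<Rightarrow> 'a) \<Rightarrow> 'a \<Rightarrow> ereal \<Rightarrow> (real \<Rightarrow> 'a) \<Rightarrow> bool" where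
  "mild_solution T S F u0 t1 u \<longleftrightarrow>
     t1 \<le> T \<and> continuous_on (Ico0 t1) u \<and>
     (\<forall>t\<in>Ico0 t1. u t = S t u0 + integral {0..t} (\<lambda>s. S (t - s) (F s (u s))))"

definition maximal_mild_solution ::
  "ereal \<Rightarrow> (real \<Rightarrow> 'a::banach \<Rightarrow> 'a) \<Rightarrow> (real \<Rightarrow> 'a \<Rightarrow> 'a) \<Rightarrow> 'a \<Rightarrow> ereal \<Rightarrow> (real \<Rightarrow> 'a) \<Rightarrow> bool" where
  "maximal_mild_solution T S F u0 t1 u \<longleftrightarrow>
     mild_solution T S F u0 t1 u \<and>
     \<not> (\<exists>t1' v. t1 < t1' \<and> t1' \<le> T \<and> mild_solution T S F u0 t1' v \<and>
                (\<forall>t\<in>Ico0 t1. v t = u t))"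

end

theory Submission
  imports Defs
begin

lemma vec_deriv_iff:
  fixes f :: "real \<Rightarrow> 'a::real_normed_vector"
  shows "(f has_vector_derivative D) (at x within S) \<longleftrightarrow>
    ((\<lambda>y. (1 / (y - x)) *\<^sub>R (f y - f x)) \<longlongrightarrow> D) (at x within S)"
proof -
  have *: "norm ((1 / norm (y - x)) *\<^sub>R (f y - (f x + (y - x) *\<^sub>R D))) = 
     norm ((1 / (y - x)) *\<^sub>R (f y - f x) - D)" if "y \<noteq> x" for y
  proof -
    have "(1 / (y - x)) *\<^sub>R (f y - f x) - D = (1 / (y - x)) *\<^sub>R (f y - (f x + (y - x) *\<^sub>R D))"
      using that by (simp add: scaleR_diff_right scaleR_add_right)
    then show ?thesis by (simp only: norm_scaleR real_norm_def abs_divide abs_one abs_abs)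
  qed
  have "((\<lambda>y. (1 / norm (y - x)) *\<^sub>R (f y - (f x + (y - x) *\<^sub>R D))) \<longlongrightarrow> 0) (at x within S)
     \<longleftrightarrow> ((\<lambda>y. (1 / (y - x)) *\<^sub>R (f y - f x) - D) \<longlongrightarrow> 0) (at x within S)"
    apply (subst (2) tendsto_norm_zero_iff[symmetric])
    apply (subst tendsto_norm_zero_iff[symmetric])
    apply (rule Lim_cong_within)
    using * by auto
  then show ?thesis
    unfolding has_vector_derivative_def has_derivative_within
    by (simp add: bounded_linear_scaleR_left Lim_null[symmetric])
qed


lemma bl_abs_nonneg: "0 \<le> sup x (- x)" for x :: "'a::banach_lattice"
proof -
  have "x + (- x) \<le> sup x (- x) + sup x (- x)"
    by (intro add_mono) auto
  then have "0 \<le> sup x (- x) + sup x (- x)" by simp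
  then have "0 \<le> (1/2::real) *\<^sub>R (sup x (- x) + sup x (- x))"
    by (intro scaleR_nonneg_nonneg) auto
  also have "\<dots> = sup x (- x)"
    by (simp add: scaleR_add_right[symmetric] scaleR_add_left[symmetric])
  finally show ?thesis .
qed

lemma bl_norm_le: "sup x (- x) \<le> sup y (- y) \<Longrightarrow> norm x \<le> norm y" for x y :: "'a::banach_lattice"
  by (rule lattice_norm)

lemma norm_pos_part_le: "norm (sup x 0) \<le> norm x" for x :: "'a::banach_lattice"
proof (rule lattice_norm)
  have "- sup x 0 \<le> sup x 0"
    by (meson neg_le_0_iff_le order.trans sup_ge2)
  then have "sup (sup x 0) (- sup x 0) = sup x 0" by (simp add: sup_absorb1)
  also have "\<dots> \<le> sup x (- x)"
    using bl_abs_nonneg[of x] by (simp add: le_supI1)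
  finally show "sup (sup x 0) (- sup x 0) \<le> sup x (- x)" .
qed

lemma norm_pos_part_lip: "norm (sup x 0 - sup y 0) \<le> norm (x - y)" for x y :: "'a::banach_lattice"
proof (rule lattice_norm)
  define c where "c = sup (x - y) (- (x - y))"
  have c0: "0 \<le> c" unfolding c_def by (rule bl_abs_nonneg)
  have y0: "0 \<le> sup y 0" "0 \<le> sup x 0" by auto
  have "x \<le> sup y 0 + c"
  proof -
    have "y + (x - y) \<le> sup y 0 + c" unfolding c_def by (intro add_mono) auto
    then show ?thesis by simp
  qed
  moreover have "0 \<le> sup y 0 + c" using c0 y0 by simp
  ultimately have "sup x 0 \<le> sup y 0 + c" by simp
  then have 1: "sup x 0 - sup y 0 \<le> c" by (simp add: diff_le_eq add.commute)
  have "y \<le> sup x 0 + c"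
  proof -
    have "x + (- (x - y)) \<le> sup x 0 + c" unfolding c_def by (intro add_mono) auto
    then show ?thesis by simp
  qed
  moreover have "0 \<le> sup x 0 + c" using c0 y0 by simp
  ultimately have "sup y 0 \<le> sup x 0 + c" by simp
  then have 2: "- (sup x 0 - sup y 0) \<le> c" by (simp add: diff_le_eq add.commute)
  from 1 2 show "sup (sup x 0 - sup y 0) (- (sup x 0 - sup y 0)) \<le> sup (x - y) (- (x - y))"
    unfolding c_def by simp
qed

lemma dist_cone: "0 \<le> p \<Longrightarrow> norm (x - sup x 0) \<le> norm (x - p)" for x p :: "'a::banach_lattice"
proof (rule lattice_norm)
  assume p: "0 \<le> p"
  define c where "c = sup (x - p) (- (x - p))"
  have c0: "0 \<le> c" unfolding c_def by (rule bl_abs_nonneg)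
  have 1: "x - sup x 0 \<le> c" using c0
    by (metis diff_le_0_iff_le order.trans sup_ge1)
  have "- (x - p) \<le> c" unfolding c_def by simp
  moreover have "- x \<le> - (x - p)" using p by simp
  ultimately have xc: "- x \<le> c" by (rule order.trans[rotated])
  have "0 \<le> x + c" using add_left_mono[OF xc, of x] by simp
  moreover have "x \<le> x + c" using c0 by simp
  ultimately have "sup x 0 \<le> x + c" by simp
  then have 2: "- (x - sup x 0) \<le> c" by (simp add: diff_le_eq add.commute)
  from 1 2 show "sup (x - sup x 0) (- (x - sup x 0)) \<le> sup (x - p) (- (x - p))"
    unfolding c_def by simp
qed

lemma cont_pos_part: "continuous_on A (\<lambda>x::'a::banach_lattice. sup x 0)"
  unfolding continuous_on_iff dist_norm
  by (metis norm_pos_part_lip order_le_less_trans)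

lemma closed_cone: "closed {x::'a::banach_lattice. 0 \<le> x}"
proof -
  have "{x::'a. 0 \<le> x} = (\<lambda>x. x - sup x 0) -` {0}"
    by (auto simp: sup_absorb1) (metis eq_iff_diff_eq_0 sup_ge2)
  moreover have "continuous_on UNIV (\<lambda>x::'a. x - sup x 0)"
    by (intro continuous_intros cont_pos_part)
  ultimately show ?thesis
    by (metis closed_singleton closed_vimage continuous_on_eq_continuous_within iso_tuple_UNIV_I)
qed


lemma integral_nonneg_bl:
  fixes f :: "real \<Rightarrow> 'a::banach_lattice"
  assumes nn: "\<And>x. x \<in> {a..b} \<Longrightarrow> 0 \<le> f x"
  shows "0 \<le> integral {a..b} f"
proof (cases "f integrable_on {a..b}")
  case False
  then show ?thesis by (simp add: not_integrable_integral)
next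
  case True
  then have hi: "(f has_integral integral {a..b} f) (cbox a b)"
    by (simp add: has_integral_integral)
  have "integral {a..b} f \<in> closure {x::'a. 0 \<le> x}"
    unfolding closure_approachable
  proof (intro allI impI)
    fix e :: real assume "e > 0"
    then obtain \<gamma> where g: "gauge \<gamma>" and
      fine: "\<And>\<D>. \<D> tagged_division_of (cbox a b) \<Longrightarrow> \<gamma> fine \<D> \<Longrightarrow>
        norm ((\<Sum>(x, k)\<in>\<D>. Henstock_Kurzweil_Integration.content k *\<^sub>R f x) - integral {a..b} f) < e"
      using hi[unfolded has_integral] by meson
    obtain \<D> where D: "\<D> tagged_division_of (cbox a b)" "\<gamma> fine \<D>"
      using fine_division_exists[OF g] by blast
    have "0 \<le> (\<Sum>(x, k)\<in>\<D>. Henstock_Kurzweil_Integration.content k *\<^sub>R f x)"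
    proof (rule sum_nonneg)
      fix xk assume "xk \<in> \<D>"
      then obtain x k where xk: "xk = (x, k)" "(x, k) \<in> \<D>" by (cases xk) auto
      have "x \<in> k" "k \<subseteq> cbox a b" using tagged_division_ofD(2,3)[OF D(1) xk(2)] by auto
      then have "x \<in> {a..b}" by auto
      then have "0 \<le> f x" by (rule nn)
      then show "0 \<le> (case xk of (x, k) \<Rightarrow> Henstock_Kurzweil_Integration.content k *\<^sub>R f x)"
        unfolding xk(1) by (simp add: scaleR_nonneg_nonneg)
    qed
    then show "\<exists>y\<in>{x. 0 \<le> x}. dist y (integral {a..b} f) < e"
      using fine[OF D] by (auto simp: dist_norm)
  qed
  then show ?thesis using closed_cone closure_closed by blast
qed


lemma c0_local_bound:
  fixes S :: "real \<Rightarrow> 'a::banach \<Rightarrow> 'a"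
  assumes c0: "c0_semigroup S"
  shows "\<exists>M>0. \<forall>t\<in>{0..b}. \<forall>x. norm (S t x) \<le> M * norm x"
proof -
  have bl: "\<And>t. t \<ge> 0 \<Longrightarrow> bounded_linear (S t)" and cont: "\<And>x. continuous_on {0..} (\<lambda>t. S t x)"
    using c0 unfolding c0_semigroup_def by auto
  define E where "E n = {x. \<forall>t\<in>{0..b}. norm (S t x) \<le> real n}" for n :: nat
  have clE: "closed (E n)" for n
  proof -
    have "E n = (\<Inter>t\<in>{0..b}. {x. norm (S t x) \<le> real n})" unfolding E_def by auto
    moreover have "closed {x. norm (S t x) \<le> real n}" if "t \<in> {0..b}" for t
    proof -
      have "continuous_on UNIV (S t)" using bl[of t] that linear_continuous_on by auto
      then have "continuous_on UNIV (\<lambda>x. norm (S t x))" by (intro continuous_intros)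
      then show ?thesis
        using closed_Collect_le[of "\<lambda>x. norm (S t x)" "\<lambda>_. real n"] by auto
    qed
    ultimately show ?thesis by auto
  qed
  have unE: "(\<Union>n. E n) = UNIV"
  proof (rule set_eqI, rule iffI)
    fix x assume "x \<in> (\<Union>n. E n)" then show "x \<in> UNIV" by simp
  next
    fix x :: 'a assume "x \<in> UNIV"
    have "compact ((\<lambda>t. S t x) ` {0..b})"
      by (rule compact_continuous_image) (auto intro: continuous_on_subset[OF cont[of x]])
    then obtain B where "\<forall>y\<in>(\<lambda>t. S t x) ` {0..b}. norm y \<le> B"
      using compact_imp_bounded bounded_iff by metis
    moreover obtain n :: nat where "B \<le> real n" using real_arch_simple by blast
    ultimately have "x \<in> E n" unfolding E_def by force
    then show "x \<in> (\<Union>n. E n)" by blast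
  qed
  have "\<exists>n. interior (E n) \<noteq> {}"
  proof (rule ccontr)
    assume "\<not> ?thesis"
    then have "euclidean interior_of (\<Union>(range E)) = {}"
      by (intro Baire_category_alt) (auto simp: completely_metrizable_space_euclidean closed_closedin[symmetric] clE)
    then show False using unE by simp
  qed
  then obtain n x0 where "x0 \<in> interior (E n)" by blast
  then obtain e where e0: "e > 0" "ball x0 e \<subseteq> interior (E n)"
    using open_contains_ball_eq[OF open_interior[of "E n"]] by auto
  then have e: "e > 0" "ball x0 e \<subseteq> E n" using interior_subset by auto
  show ?thesis
  proof (intro exI[of _ "4 * real n / e + 1"] conjI ballI allI)
    have "0 \<le> 4 * real n / e" using e by simp
    then show "0 < 4 * real n / e + 1" by linarith
    fix t x assume t: "t \<in> {0..b}"
    show "norm (S t x) \<le> (4 * real n / e + 1) * norm x"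
    proof (cases "x = 0")
      case True then show ?thesis using bl[of t] t linear_0[of "S t"] bounded_linear.linear by auto
    next
      case False
      define c where "c = e / 2 / norm x"
      have c: "c > 0" using e False by (simp add: c_def)
      have "x0 + c *\<^sub>R x \<in> ball x0 e" using e False by (simp add: c_def dist_norm)
      then have "x0 + c *\<^sub>R x \<in> E n" using e by blast
      then have 1: "norm (S t (x0 + c *\<^sub>R x)) \<le> real n" using t unfolding E_def by auto
      have "x0 \<in> E n" using e centre_in_ball by blast
      then have 2: "norm (S t x0) \<le> real n" using t unfolding E_def by auto
      have "S t (x0 + c *\<^sub>R x) = S t x0 + c *\<^sub>R S t x"
        using bl[of t] t by (simp add: linear_add linear_scale bounded_linear.linear)
      then have "c * norm (S t x) \<le> norm (S t (x0 + c *\<^sub>R x)) + norm (S t x0)"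
        using c norm_triangle_ineq4[of "S t (x0 + c *\<^sub>R x)" "S t x0"] by simp
      also have "\<dots> \<le> 2 * real n" using 1 2 by simp
      finally have "norm (S t x) \<le> 2 * real n / c" using c by (simp add: field_simps)
      also have "\<dots> = (4 * real n / e) * norm x" using e False by (simp add: c_def field_simps)
      also have "\<dots> \<le> (4 * real n / e + 1) * norm x" by (simp add: distrib_right)
      finally show ?thesis .
    qed
  qed
qed


lemma c0_tendsto:
  fixes S :: "real \<Rightarrow> 'a::banach \<Rightarrow> 'a"
  assumes c0: "c0_semigroup S" and sig: "(\<sigma> \<longlongrightarrow> \<sigma>0) F" and w: "(w \<longlongrightarrow> w0) F"
    and ev: "eventually (\<lambda>x. \<sigma> x \<ge> 0) F" and s0: "\<sigma>0 \<ge> 0"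
  shows "((\<lambda>x. S (\<sigma> x) (w x)) \<longlongrightarrow> S \<sigma>0 w0) F"
proof -
  have bl: "\<And>t. t \<ge> 0 \<Longrightarrow> bounded_linear (S t)" and cont: "\<And>x. continuous_on {0..} (\<lambda>t. S t x)"
    using c0 unfolding c0_semigroup_def by auto
  obtain M where M: "M > 0" "\<And>t x. t \<in> {0..\<sigma>0+1} \<Longrightarrow> norm (S t x) \<le> M * norm x"
    using c0_local_bound[OF c0, of "\<sigma>0 + 1"] by blast
  have ev2: "eventually (\<lambda>x. \<sigma> x < \<sigma>0 + 1) F" using sig by (rule order_tendstoD) simp
  have lim1: "((\<lambda>x. S (\<sigma> x) w0) \<longlongrightarrow> S \<sigma>0 w0) F"
    by (rule continuous_on_tendsto_compose[OF cont sig]) (use s0 ev in auto)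
  have lim2: "((\<lambda>x. M * norm (w x - w0) + norm (S (\<sigma> x) w0 - S \<sigma>0 w0)) \<longlongrightarrow> 0) F"
  proof -
    have a: "((\<lambda>x. w x - w0) \<longlongrightarrow> 0) F" using w by (simp add: Lim_null[symmetric])
    have b: "((\<lambda>x. S (\<sigma> x) w0 - S \<sigma>0 w0) \<longlongrightarrow> 0) F" using lim1 by (simp add: Lim_null[symmetric])
    have "((\<lambda>x. M * norm (w x - w0) + norm (S (\<sigma> x) w0 - S \<sigma>0 w0)) \<longlongrightarrow> M * 0 + 0) F"
      by (intro tendsto_intros tendsto_norm_zero a b)
    then show ?thesis by simp
  qed
  have "((\<lambda>x. S (\<sigma> x) (w x) - S \<sigma>0 w0) \<longlongrightarrow> 0) F"
  proof (rule Lim_null_comparison[OF _ lim2])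
    show "\<forall>\<^sub>F x in F. norm (S (\<sigma> x) (w x) - S \<sigma>0 w0) \<le> M * norm (w x - w0) + norm (S (\<sigma> x) w0 - S \<sigma>0 w0)"
      using ev ev2
    proof eventually_elim
      case (elim x)
      then have t: "\<sigma> x \<in> {0..\<sigma>0+1}" by auto
      have "S (\<sigma> x) (w x) - S \<sigma>0 w0 = S (\<sigma> x) (w x - w0) + (S (\<sigma> x) w0 - S \<sigma>0 w0)"
        using bl[of "\<sigma> x"] elim by (simp add: linear_diff bounded_linear.linear)
      then have "norm (S (\<sigma> x) (w x) - S \<sigma>0 w0) \<le> norm (S (\<sigma> x) (w x - w0)) + norm (S (\<sigma> x) w0 - S \<sigma>0 w0)"
        by (metis norm_triangle_ineq)
      also have "\<dots> \<le> M * norm (w x - w0) + norm (S (\<sigma> x) w0 - S \<sigma>0 w0)"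
        using M(2)[OF t] by simp
      finally show ?case .
    qed
  qed
  then show ?thesis by (simp add: Lim_null[symmetric])
qed

lemma c0_cont_comp:
  fixes S :: "real \<Rightarrow> 'a::banach \<Rightarrow> 'a"
  assumes c0: "c0_semigroup S" and sig: "continuous_on A \<sigma>" and w: "continuous_on A w"
    and pos: "\<And>x. x \<in> A \<Longrightarrow> \<sigma> x \<ge> 0"
  shows "continuous_on A (\<lambda>x. S (\<sigma> x) (w x))"
  unfolding continuous_on_def
proof
  fix x assume x: "x \<in> A"
  show "((\<lambda>x. S (\<sigma> x) (w x)) \<longlongrightarrow> S (\<sigma> x) (w x)) (at x within A)"
    apply (rule c0_tendsto[OF c0])
    using sig w x pos by (auto simp: continuous_on_def eventually_at_filter)
qed


lemma c0_bl: "c0_semigroup S \<Longrightarrow> t \<ge> 0 \<Longrightarrow> bounded_linear (S t)"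
  unfolding c0_semigroup_def by auto
lemma c0_comp: "c0_semigroup S \<Longrightarrow> t \<ge> 0 \<Longrightarrow> s \<ge> 0 \<Longrightarrow> S (t + s) x = S t (S s x)"
  unfolding c0_semigroup_def by auto
lemma c0_id: "c0_semigroup S \<Longrightarrow> S 0 x = x"
  unfolding c0_semigroup_def by auto
lemma c0_cont: "c0_semigroup S \<Longrightarrow> continuous_on {0..} (\<lambda>t. S t x)"
  unfolding c0_semigroup_def by auto
lemma c0_diff: "c0_semigroup S \<Longrightarrow> t \<ge> 0 \<Longrightarrow> S t x - S t y = S t (x - y)"
  using c0_bl[of S t] by (simp add: linear_diff bounded_linear.linear)
lemma c0_scale: "c0_semigroup S \<Longrightarrow> t \<ge> 0 \<Longrightarrow> S t (c *\<^sub>R x) = c *\<^sub>R S t x"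
  using c0_bl[of S t] by (simp add: linear_scale bounded_linear.linear)
lemma c0_add: "c0_semigroup S \<Longrightarrow> t \<ge> 0 \<Longrightarrow> S t (x + y) = S t x + S t y"
  using c0_bl[of S t] by (simp add: linear_add bounded_linear.linear)

lemma right_quot_lim:
  fixes f :: "real \<Rightarrow> 'a::real_normed_vector"
  assumes "((\<lambda>y. (1 / (y - a)) *\<^sub>R (f y - f a)) \<longlongrightarrow> L) (at a within {a..b})" "a < b"
  shows "((\<lambda>k. (1 / k) *\<^sub>R (f (a + k) - f a)) \<longlongrightarrow> L) (at_right 0)"
proof -
  have "filterlim (\<lambda>k. a + k) (at a within {a..b}) (at_right 0)"
    unfolding filterlim_at
  proof
    have "eventually (\<lambda>k. k < b - a) (at_right (0::real))"
      using assms(2) by (intro order_tendstoD(2)[OF tendsto_ident_at]) auto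
    moreover have "eventually (\<lambda>k. 0 < k) (at_right (0::real))"
      by (rule eventually_at_right_less)
    ultimately show "\<forall>\<^sub>F x in at_right 0. a + x \<in> {a..b} \<and> a + x \<noteq> a"
      by eventually_elim auto
    have "((\<lambda>k. a + k) \<longlongrightarrow> a + 0) (at_right 0)"
      by (intro tendsto_intros)
    then show "((\<lambda>k. a + k) \<longlongrightarrow> a) (at_right 0)" by simp
  qed
  from filterlim_compose[OF assms(1) this] show ?thesis by simp
qed


lemma gen_lim: "is_generator S D G \<Longrightarrow> x \<in> D \<Longrightarrow> ((\<lambda>h. (1/h) *\<^sub>R (S h x - x)) \<longlongrightarrow> G x) (at_right 0)"
  unfolding is_generator_def by auto

lemma gen_mem:
  assumes "is_generator S D G" "((\<lambda>h. (1/h) *\<^sub>R (S h x - x)) \<longlongrightarrow> L) (at_right 0)"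
  shows "x \<in> D" "G x = L"
proof -
  show xD: "x \<in> D" using assms unfolding is_generator_def by auto
  show "G x = L"
    using tendsto_unique[OF trivial_limit_at_right_real gen_lim[OF assms(1) xD] assms(2)] .
qed

lemma abs_to_right:
  "filterlim (\<lambda>y. \<bar>y - (s::real)\<bar>) (at_right 0) (at s within A)"
  unfolding filterlim_at
proof
  show "\<forall>\<^sub>F x in at s within A. \<bar>x - s\<bar> \<in> {0<..} \<and> \<bar>x - s\<bar> \<noteq> 0"
    by (auto simp: eventually_at_filter)
  have "((\<lambda>y. \<bar>y - s\<bar>) \<longlongrightarrow> \<bar>s - s\<bar>) (at s within A)"
    by (intro tendsto_intros)
  then show "((\<lambda>y. \<bar>y - s\<bar>) \<longlongrightarrow> 0) (at s within A)" by simp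
qed

lemma semigroup_deriv:
  fixes S :: "real \<Rightarrow> 'a::banach \<Rightarrow> 'a"
  assumes c0: "c0_semigroup S" and gen: "is_generator S D G" and xD: "x \<in> D" and s0: "\<sigma> \<ge> 0"
  shows "((\<lambda>t. S t x) has_vector_derivative S \<sigma> (G x)) (at \<sigma> within {0..})"
  unfolding vec_deriv_iff
proof -
  define Q where "Q h = (1/h) *\<^sub>R (S h x - x)" for h
  have ident: "(1 / (y - \<sigma>)) *\<^sub>R (S y x - S \<sigma> x) = S (min \<sigma> y) (Q \<bar>y - \<sigma>\<bar>)"
    if y: "y \<ge> 0" "y \<noteq> \<sigma>" for y
  proof (cases "y > \<sigma>")
    case True
    define h where "h = y - \<sigma>"
    have h: "h > 0" "y = \<sigma> + h" using True by (auto simp: h_def)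
    have "S y x = S \<sigma> (S h x)" using c0_comp[OF c0, of \<sigma> h x] h s0 by simp
    then have "(1 / (y - \<sigma>)) *\<^sub>R (S y x - S \<sigma> x) = S \<sigma> (Q h)"
      unfolding Q_def using h s0 by (simp add: c0_diff[OF c0] c0_scale[OF c0])
    then show ?thesis using h by (simp add: min_def)
  next
    case False
    define h where "h = \<sigma> - y"
    have h: "h > 0" "\<sigma> = y + h" using False y by (auto simp: h_def)
    have "S \<sigma> x = S y (S h x)" using c0_comp[OF c0, of y h x] h y by simp
    then have "(1 / (y - \<sigma>)) *\<^sub>R (S y x - S \<sigma> x) = S y ((1 / (y - \<sigma>)) *\<^sub>R (x - S h x))"
      using y by (simp add: c0_diff[OF c0] c0_scale[OF c0])
    also have "(1 / (y - \<sigma>)) *\<^sub>R (x - S h x) = Q h"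
      unfolding Q_def using h by (simp add: scaleR_diff_right divide_simps)
    finally show ?thesis using h False by (simp add: min_def)
  qed
  have lim: "((\<lambda>y. S (min \<sigma> y) (Q \<bar>y - \<sigma>\<bar>)) \<longlongrightarrow> S (min \<sigma> \<sigma>) (G x)) (at \<sigma> within {0..})"
  proof (rule c0_tendsto[OF c0])
    show "((\<lambda>y. min \<sigma> y) \<longlongrightarrow> min \<sigma> \<sigma>) (at \<sigma> within {0..})" by (intro tendsto_intros)
    show "((\<lambda>y. Q \<bar>y - \<sigma>\<bar>) \<longlongrightarrow> G x) (at \<sigma> within {0..})"
      using filterlim_compose[OF gen_lim[OF gen xD] abs_to_right] unfolding Q_def .
    show "\<forall>\<^sub>F y in at \<sigma> within {0..}. 0 \<le> min \<sigma> y"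
      using s0 by (auto simp: eventually_at_filter)
    show "0 \<le> min \<sigma> \<sigma>" using s0 by simp
  qed
  show "((\<lambda>y. (1 / (y - \<sigma>)) *\<^sub>R (S y x - S \<sigma> x)) \<longlongrightarrow> S \<sigma> (G x)) (at \<sigma> within {0..})"
  proof (rule Lim_transform_eventually)
    show "((\<lambda>y. S (min \<sigma> y) (Q \<bar>y - \<sigma>\<bar>)) \<longlongrightarrow> S \<sigma> (G x)) (at \<sigma> within {0..})" using lim by simp
    show "\<forall>\<^sub>F y in at \<sigma> within {0..}. S (min \<sigma> y) (Q \<bar>y - \<sigma>\<bar>) = (1 / (y - \<sigma>)) *\<^sub>R (S y x - S \<sigma> x)"
      by (auto simp: eventually_at_filter ident)
  qed
qed

lemma gen_invariant:
  fixes P :: "real \<Rightarrow> 'a::banach \<Rightarrow> 'a"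
  assumes c0: "c0_semigroup P" and gen: "is_generator P D G" and yD: "y \<in> D" and s0: "s \<ge> 0"
  shows "P s y \<in> D" "G (P s y) = P s (G y)"
proof -
  have "((\<lambda>h. P s ((1/h) *\<^sub>R (P h y - y))) \<longlongrightarrow> P s (G y)) (at_right 0)"
    using bounded_linear.tendsto[OF c0_bl[OF c0 s0] gen_lim[OF gen yD]] .
  moreover have "\<forall>\<^sub>F h in at_right 0. P s ((1/h) *\<^sub>R (P h y - y)) = (1/h) *\<^sub>R (P h (P s y) - P s y)"
  proof -
    have "\<forall>\<^sub>F h in at_right (0::real). 0 < h" by (rule eventually_at_right_less)
    then show ?thesis
    proof eventually_elim
      case (elim h)
      have "P h (P s y) = P s (P h y)"
        using c0_comp[OF c0, of h s y] c0_comp[OF c0, of s h y] elim s0 by (simp add: add.commute)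
      then show ?case using s0 by (simp add: c0_diff[OF c0] c0_scale[OF c0])
    qed
  qed
  ultimately have "((\<lambda>h. (1/h) *\<^sub>R (P h (P s y) - P s y)) \<longlongrightarrow> P s (G y)) (at_right 0)"
    by (rule Lim_transform_eventually)
  from gen_mem[OF gen this] show "P s y \<in> D" "G (P s y) = P s (G y)" by auto
qed


lemma semigroup_unique_D:
  fixes S P :: "real \<Rightarrow> 'a::banach \<Rightarrow> 'a"
  assumes cS: "c0_semigroup S" and cP: "c0_semigroup P"
    and gS: "is_generator S D G" and gP: "is_generator P D G"
    and yD: "y \<in> D" and t0: "t \<ge> 0"
  shows "S t y = P t y"
proof -
  define f where "f s = S (t - s) (P s y)" for s
  have der: "(f has_derivative (\<lambda>h. 0)) (at s within {0..t})" if s: "s \<in> {0..t}" for s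
  proof -
    define z where "z = P s y"
    have zD: "z \<in> D" and Gz: "G z = P s (G y)" using gen_invariant[OF cP gP yD] s by (auto simp: z_def)
    have dv: "((\<lambda>r. (1/(r-s)) *\<^sub>R (P r y - P s y)) \<longlongrightarrow> P s (G y)) (at s within {0..t})"
      using has_vector_derivative_within_subset[OF semigroup_deriv[OF cP gP yD, of s], of "{0..t}"] s
      unfolding vec_deriv_iff by auto
    have dS0: "((\<lambda>\<sigma>. S \<sigma> z) has_vector_derivative S (t-s) (G z)) (at (t - s) within (\<lambda>r. t - r) ` {0..t})"
      using has_vector_derivative_within_subset[OF semigroup_deriv[OF cS gS zD, of "t-s"]] s by auto
    have dm: "((\<lambda>r. t - r) has_vector_derivative (-1)) (at s within {0..t})"
      by (auto intro!: derivative_eq_intros simp: has_real_derivative_iff_has_vector_derivative[symmetric])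
    have dS: "((\<lambda>r. (1/(r-s)) *\<^sub>R (S (t - r) z - S (t - s) z)) \<longlongrightarrow> - S (t-s) (G z)) (at s within {0..t})"
      using vector_diff_chain_within[OF dm dS0] unfolding vec_deriv_iff by (simp add: o_def)
    have t1: "((\<lambda>r. S (t - r) ((1/(r-s)) *\<^sub>R (P r y - P s y))) \<longlongrightarrow> S (t - s) (P s (G y))) (at s within {0..t})"
      apply (rule c0_tendsto[OF cS _ dv])
      using s by (auto intro!: tendsto_intros simp: eventually_at_filter)
    have "((\<lambda>r. S (t - r) ((1/(r-s)) *\<^sub>R (P r y - P s y)) + (1/(r-s)) *\<^sub>R (S (t - r) z - S (t - s) z))
        \<longlongrightarrow> S (t - s) (P s (G y)) + - S (t-s) (G z)) (at s within {0..t})"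
      by (rule tendsto_add[OF t1 dS])
    then have lim: "((\<lambda>r. S (t - r) ((1/(r-s)) *\<^sub>R (P r y - P s y)) + (1/(r-s)) *\<^sub>R (S (t - r) z - S (t - s) z))
        \<longlongrightarrow> 0) (at s within {0..t})" using Gz by simp
    have "((\<lambda>r. (1/(r-s)) *\<^sub>R (f r - f s)) \<longlongrightarrow> 0) (at s within {0..t})"
    proof (rule Lim_transform_eventually[OF lim])
      show "\<forall>\<^sub>F r in at s within {0..t}. S (t - r) ((1/(r-s)) *\<^sub>R (P r y - P s y)) + (1/(r-s)) *\<^sub>R (S (t - r) z - S (t - s) z)
          = (1/(r-s)) *\<^sub>R (f r - f s)"
        unfolding eventually_at_filter
      proof (intro always_eventually allI impI)
        fix r assume r: "r \<noteq> s" "r \<in> {0..t}"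
        have "S (t - r) ((1/(r-s)) *\<^sub>R (P r y - P s y)) = (1/(r-s)) *\<^sub>R (S (t - r) (P r y) - S (t - r) z)"
          using r by (simp add: c0_scale[OF cS] c0_diff[OF cS] z_def)
        then show "S (t - r) ((1/(r-s)) *\<^sub>R (P r y - P s y)) + (1/(r-s)) *\<^sub>R (S (t - r) z - S (t - s) z)
          = (1/(r-s)) *\<^sub>R (f r - f s)"
          by (simp add: f_def z_def scaleR_diff_right)
      qed
    qed
    then have "(f has_vector_derivative 0) (at s within {0..t})" unfolding vec_deriv_iff .
    then show ?thesis by (simp add: has_vector_derivative_def)
  qed
  obtain c where "\<forall>x\<in>{0..t}. f x = c"
    using has_derivative_zero_constant[of "{0..t}" f] der by auto
  then have "f 0 = f t" using t0 by auto
  then show ?thesis unfolding f_def using c0_id[OF cS] c0_id[OF cP] by simp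
qed


lemma semigroup_unique:
  fixes S P :: "real \<Rightarrow> 'a::banach \<Rightarrow> 'a"
  assumes cS: "c0_semigroup S" and cP: "c0_semigroup P"
    and gS: "is_generator S D G" and gP: "is_generator P D G"
    and t0: "t \<ge> 0"
  shows "S t x = P t x"
proof -
  define \<Phi> where "\<Phi> s = integral {0..s} (\<lambda>r. S r x)" for s
  have contb: "continuous_on {0..b} (\<lambda>r. S r x)" for b
    by (rule continuous_on_subset[OF c0_cont[OF cS]]) auto
  have intb: "(\<lambda>r. S r x) integrable_on {a..b}" if "a \<ge> 0" for a b
    by (rule integrable_continuous_interval, rule continuous_on_subset[OF c0_cont[OF cS]]) (use that in auto)
  have \<Phi>0: "\<Phi> 0 = 0" by (simp add: \<Phi>_def)
  have rq: "((\<lambda>k. (1 / k) *\<^sub>R (\<Phi> (a + k) - \<Phi> a)) \<longlongrightarrow> S a x) (at_right 0)" if a: "a \<ge> 0" for a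
  proof (rule right_quot_lim[where b = "a + 1"])
    have "(\<Phi> has_vector_derivative S a x) (at a within {0..a+1})"
      unfolding \<Phi>_def using integral_has_vector_derivative[OF contb, of a "a+1"] a by auto
    then have "(\<Phi> has_vector_derivative S a x) (at a within {a..a+1})"
      by (rule has_vector_derivative_within_subset) (use a in auto)
    then show "((\<lambda>y. (1 / (y - a)) *\<^sub>R (\<Phi> y - \<Phi> a)) \<longlongrightarrow> S a x) (at a within {a..a + 1})"
      unfolding vec_deriv_iff .
  qed simp
  have shift: "S k (\<Phi> h) = \<Phi> (h + k) - \<Phi> k" if hk: "h \<ge> 0" "k \<ge> 0" for h k
  proof -
    have "S k (\<Phi> h) = integral {0..h} (S k \<circ> (\<lambda>r. S r x))"
      unfolding \<Phi>_def by (rule integral_linear[symmetric, OF intb c0_bl[OF cS]]) (use hk in auto)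
    also have "\<dots> = integral {0..h} ((\<lambda>r. S r x) \<circ> (+) k)"
      by (rule integral_cong) (use hk c0_comp[OF cS, of k] in auto)
    also have "\<dots> = integral {0+k..h+k} (\<lambda>r. S r x)" by (rule integral_shift_Icc_real)
    also have "\<dots> = \<Phi> (h + k) - \<Phi> k"
      unfolding \<Phi>_def using Henstock_Kurzweil_Integration.integral_combine[where a=0 and c=k and b="h+k" and f="\<lambda>r. S r x"] intb[of 0 "h+k"] hk
      by (simp add: algebra_simps)
    finally show ?thesis .
  qed
  define yh where "yh h = (1/h) *\<^sub>R \<Phi> h" for h
  have yD: "yh h \<in> D" if h: "h > 0" for h
  proof (rule gen_mem(1)[OF gS])
    have "((\<lambda>k. (1/h) *\<^sub>R ((1 / k) *\<^sub>R (\<Phi> (h + k) - \<Phi> h) - (1 / k) *\<^sub>R (\<Phi> (0 + k) - \<Phi> 0)))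
         \<longlongrightarrow> (1/h) *\<^sub>R (S h x - S 0 x)) (at_right 0)"
      using h by (intro tendsto_intros rq) auto
    moreover have "\<forall>\<^sub>F k in at_right 0. (1/h) *\<^sub>R ((1 / k) *\<^sub>R (\<Phi> (h + k) - \<Phi> h) - (1 / k) *\<^sub>R (\<Phi> (0 + k) - \<Phi> 0))
         = (1/k) *\<^sub>R (S k (yh h) - yh h)"
    proof -
      have "\<forall>\<^sub>F k in at_right (0::real). 0 < k" by (rule eventually_at_right_less)
      then show ?thesis
      proof eventually_elim
        case (elim k)
        have e: "S k (yh h) = (1/h) *\<^sub>R (\<Phi> (h + k) - \<Phi> k)"
          unfolding yh_def using shift[of h k] elim h by (simp add: c0_scale[OF cS])
        show ?case unfolding e unfolding yh_def \<Phi>0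
          by (simp add: scaleR_diff_right scaleR_scaleR mult.commute)
      qed
    qed
    ultimately show "((\<lambda>k. (1/k) *\<^sub>R (S k (yh h) - yh h)) \<longlongrightarrow> (1/h) *\<^sub>R (S h x - S 0 x)) (at_right 0)"
      by (rule Lim_transform_eventually)
  qed
  have ylim: "(yh \<longlongrightarrow> x) (at_right 0)"
  proof -
    have "((\<lambda>k. (1 / k) *\<^sub>R (\<Phi> (0 + k) - \<Phi> 0)) \<longlongrightarrow> S 0 x) (at_right 0)" by (rule rq) simp
    then have "((\<lambda>k. (1 / k) *\<^sub>R \<Phi> k) \<longlongrightarrow> x) (at_right 0)" using \<Phi>0 c0_id[OF cS] by simp
    then show ?thesis unfolding yh_def[abs_def] .
  qed
  have eq: "\<forall>\<^sub>F h in at_right 0. S t (yh h) = P t (yh h)"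
  proof -
    have "\<forall>\<^sub>F k in at_right (0::real). 0 < k" by (rule eventually_at_right_less)
    then show ?thesis
      by eventually_elim (rule semigroup_unique_D[OF cS cP gS gP yD t0])
  qed
  have l1: "((\<lambda>h. S t (yh h)) \<longlongrightarrow> S t x) (at_right 0)"
    by (rule bounded_linear.tendsto[OF c0_bl[OF cS t0] ylim])
  have l2: "((\<lambda>h. S t (yh h)) \<longlongrightarrow> P t x) (at_right 0)"
    using Lim_transform_eventually[OF bounded_linear.tendsto[OF c0_bl[OF cP t0] ylim]] eq
    by (simp add: eventually_mono eq_commute)
  show ?thesis using tendsto_unique[OF trivial_limit_at_right_real l1 l2] .
qed


lemma S_positive:
  fixes S :: "real \<Rightarrow> 'a::banach_lattice \<Rightarrow> 'a"
  assumes gen: "generates_c0 D G S"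
    and shifted_pos: "\<forall>\<gamma>\<ge>0. \<exists>P. generates_c0 D (\<lambda>x. G x - \<gamma> *\<^sub>R x) P \<and> positive_semigroup P"
    and t: "t \<ge> 0" and x: "0 \<le> x"
  shows "0 \<le> S t x"
proof -
  obtain P where P: "generates_c0 D (\<lambda>x. G x - 0 *\<^sub>R x) P" "positive_semigroup P"
    using shifted_pos by auto
  have "(\<lambda>x. G x - 0 *\<^sub>R x) = G" by auto
  then have P': "c0_semigroup P" "is_generator P D G" using P(1) unfolding generates_c0_def by auto
  have "S t x = P t x"
    using semigroup_unique[of S P D G t x] gen P' t unfolding generates_c0_def by auto
  then show ?thesis using P(2) t x unfolding positive_semigroup_def by auto
qed

lemma conv_cont:
  fixes S :: "real \<Rightarrow> 'a::banach \<Rightarrow> 'a"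
  assumes c0: "c0_semigroup S" and f: "continuous_on {a..t} f"
  shows "continuous_on {a..t} (\<lambda>s. S (t - s) (f s))"
  by (rule c0_cont_comp[OF c0 _ f]) (auto intro!: continuous_intros)

lemma shifted_formula:
  fixes S :: "real \<Rightarrow> 'a::banach \<Rightarrow> 'a"
  assumes c0: "c0_semigroup S" and f: "continuous_on {0..\<tau>} f"
    and v: "\<And>t. t \<in> {0..\<tau>} \<Longrightarrow> v t = S t u0 + integral {0..t} (\<lambda>s. S (t - s) (f s))"
    and t: "t \<in> {0..\<tau>}"
  shows "v t = exp (- \<gamma> * t) *\<^sub>R S t u0 +
    integral {0..t} (\<lambda>s. exp (- \<gamma> * (t - s)) *\<^sub>R S (t - s) (f s + \<gamma> *\<^sub>R v s))"
proof -
  define g where "g r = S (t - r) (f r)" for r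
  define Gi where "Gi s = integral {0..s} g" for s
  have ft: "continuous_on {0..t} f" using continuous_on_subset[OF f] t by auto
  have gc: "continuous_on {0..t} g" unfolding g_def by (rule conv_cont[OF c0 ft])
  have claim: "S (t - s) (v s) = S t u0 + Gi s" if s: "s \<in> {0..t}" for s
  proof -
    have fs: "continuous_on {0..s} f" using continuous_on_subset[OF f] t s by auto
    have int: "(\<lambda>r. S (s - r) (f r)) integrable_on {0..s}"
      by (rule integrable_continuous_interval, rule conv_cont[OF c0 fs])
    have "S (t - s) (v s) = S (t - s) (S s u0) + S (t - s) (integral {0..s} (\<lambda>r. S (s - r) (f r)))"
      using v[of s] s t by (simp add: c0_add[OF c0])
    also have "S (t - s) (S s u0) = S t u0" using c0_comp[OF c0, of "t - s" s] s by simp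
    also have "S (t - s) (integral {0..s} (\<lambda>r. S (s - r) (f r))) = integral {0..s} (S (t - s) \<circ> (\<lambda>r. S (s - r) (f r)))"
      by (rule integral_linear[symmetric, OF int c0_bl[OF c0]]) (use s in auto)
    also have "\<dots> = Gi s" unfolding Gi_def g_def
    proof (rule integral_cong)
      fix r assume r: "r \<in> {0..s}"
      have "S ((t - s) + (s - r)) (f r) = S (t - s) (S (s - r) (f r))"
        using c0_comp[OF c0, of "t - s" "s - r"] r s by auto
      then show "(S (t - s) \<circ> (\<lambda>r. S (s - r) (f r))) r = S (t - r) (f r)" by simp
    qed
    finally show ?thesis .
  qed
  define H where "H s = exp (- \<gamma> * (t - s)) *\<^sub>R (S t u0 + Gi s)" for s
  have Hd: "(H has_vector_derivative (exp (- \<gamma> * (t - s)) *\<^sub>R S (t - s) (f s + \<gamma> *\<^sub>R v s))) (at s within {0..t})"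
    if s: "s \<in> {0..t}" for s
  proof -
    have e: "((\<lambda>s. exp (- \<gamma> * (t - s))) has_field_derivative (exp (- \<gamma> * (t - s)) * \<gamma>)) (at s within {0..t})"
      by (auto intro!: derivative_eq_intros)
    have gd: "((\<lambda>s. S t u0 + Gi s) has_vector_derivative (0 + g s)) (at s within {0..t})"
      unfolding Gi_def by (intro derivative_intros integral_has_vector_derivative[OF gc s])
    have "(H has_vector_derivative (exp (- \<gamma> * (t - s)) *\<^sub>R (0 + g s) + (exp (- \<gamma> * (t - s)) * \<gamma>) *\<^sub>R (S t u0 + Gi s))) (at s within {0..t})"
      unfolding H_def by (rule has_vector_derivative_scaleR[OF e gd])
    moreover have "exp (- \<gamma> * (t - s)) *\<^sub>R (0 + g s) + (exp (- \<gamma> * (t - s)) * \<gamma>) *\<^sub>R (S t u0 + Gi s)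
        = exp (- \<gamma> * (t - s)) *\<^sub>R S (t - s) (f s + \<gamma> *\<^sub>R v s)"
      using claim[OF s] s by (simp add: g_def c0_add[OF c0] c0_scale[OF c0] scaleR_add_right)
    ultimately show ?thesis by simp
  qed
  have "((\<lambda>s. exp (- \<gamma> * (t - s)) *\<^sub>R S (t - s) (f s + \<gamma> *\<^sub>R v s)) has_integral (H t - H 0)) {0..t}"
    by (rule fundamental_theorem_of_calculus) (use t Hd in auto)
  moreover have "H t = v t" using claim[of t] t c0_id[OF c0] by (simp add: H_def)
  moreover have "H 0 = exp (- \<gamma> * t) *\<^sub>R S t u0" by (simp add: H_def Gi_def)
  ultimately show ?thesis by (simp add: integral_unique)
qed


lemma gronwall0:
  fixes b :: "real \<Rightarrow> real"
  assumes K: "K > 0" and bc: "continuous_on {0..\<tau>} b"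
    and le: "\<And>t. t \<in> {0..\<tau>} \<Longrightarrow> b t \<le> c + K * integral {0..t} b"
    and t: "t \<in> {0..\<tau>}"
  shows "b t \<le> c * exp (K * t)"
proof -
  define B where "B s = integral {0..s} b" for s
  define W where "W s = exp (- K * s) * (B s + c / K)" for s
  have Bd: "(B has_real_derivative b s) (at s within {0..\<tau>})" if "s \<in> {0..\<tau>}" for s
    unfolding B_def by (rule integral_has_real_derivative[OF bc that])
  have Wd: "(W has_real_derivative (exp (- K * s) * (b s - K * B s - c))) (at s within {0..\<tau>})"
    if s: "s \<in> {0..\<tau>}" for s
  proof -
    have "(W has_real_derivative (exp (- K * s) * b s + (exp (- K * s) * (- K)) * (B s + c / K))) (at s within {0..\<tau>})"
      unfolding W_def by (auto intro!: derivative_eq_intros Bd[OF s])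
    moreover have "exp (- K * s) * b s + (exp (- K * s) * (- K)) * (B s + c / K) = exp (- K * s) * (b s - K * B s - c)"
      using K by (simp add: field_simps)
    ultimately show ?thesis by simp
  qed
  have Wc: "continuous_on {0..t} W"
  proof -
    have "continuous_on {0..\<tau>} W"
      using Wd by (meson DERIV_continuous continuous_at_imp_continuous_on continuous_on_eq_continuous_within)
    then show ?thesis by (rule continuous_on_subset) (use t in auto)
  qed
  have "W 0 \<ge> W t"
  proof (rule DERIV_nonpos_imp_decreasing_open[OF _ _ Wc])
    show "0 \<le> t" using t by simp
    fix x assume x: "0 < x" "x < t"
    then have xi: "x \<in> {0..\<tau>}" using t by auto
    have "at x within {0..\<tau>} = at x" using x t by (intro at_within_Icc_at) auto
    then have "(W has_real_derivative (exp (- K * x) * (b x - K * B x - c))) (at x)" using Wd[OF xi] by simp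
    moreover have "exp (- K * x) * (b x - K * B x - c) \<le> 0"
      using le[OF xi] by (intro mult_nonneg_nonpos) (auto simp: B_def)
    ultimately show "\<exists>y. (W has_real_derivative y) (at x) \<and> y \<le> 0" by blast
  qed
  then have "exp (- K * t) * (B t + c / K) \<le> c / K" by (simp add: W_def B_def)
  then have "B t + c / K \<le> c / K * exp (K * t)"
    by (simp add: exp_minus field_simps)
  then have "K * (B t + c / K) \<le> K * (c / K * exp (K * t))"
    by (rule mult_left_mono) (use K in auto)
  then have "K * B t \<le> c * exp (K * t) - c" using K by (simp add: distrib_left)
  then show ?thesis using le[OF t] by (simp add: B_def)
qed


lemma exp_conv_cont:
  fixes S :: "real \<Rightarrow> 'a::banach \<Rightarrow> 'a"
  assumes c0: "c0_semigroup S" and h: "continuous_on {0..t} h"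
  shows "continuous_on {0..t} (\<lambda>s. exp (- \<gamma> * (t - s)) *\<^sub>R S (t - s) (h s))"
  by (intro continuous_intros conv_cont[OF c0 h])

lemma positivity_lemma:
  fixes S :: "real \<Rightarrow> 'a::banach_lattice \<Rightarrow> 'a" and F :: "real \<Rightarrow> 'a \<Rightarrow> 'a"
  assumes c0: "c0_semigroup S"
    and Spos: "\<And>t x. t \<ge> 0 \<Longrightarrow> 0 \<le> x \<Longrightarrow> 0 \<le> S t x"
    and M: "M > 0" "\<And>t x. t \<in> {0..\<tau>} \<Longrightarrow> norm (S t x) \<le> M * norm x"
    and uc: "continuous_on {0..\<tau>} u"
    and ur: "\<And>t. t \<in> {0..\<tau>} \<Longrightarrow> norm (u t) \<le> r"
    and Fc: "\<And>w. continuous_on {0..\<tau>} w \<Longrightarrow> continuous_on {0..\<tau>} (\<lambda>s. F s (w s))"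
    and L: "L \<ge> 0" "\<And>t f g. t \<in> {0..\<tau>} \<Longrightarrow> norm f \<le> r \<Longrightarrow> norm g \<le> r \<Longrightarrow> norm (F t f - F t g) \<le> L * norm (f - g)"
    and \<gamma>: "\<gamma> \<ge> 0" "\<And>v t. 0 \<le> v \<Longrightarrow> norm v \<le> r \<Longrightarrow> t \<in> {0..\<tau>} \<Longrightarrow> 0 \<le> F t v + \<gamma> *\<^sub>R v"
    and mild: "\<And>t. t \<in> {0..\<tau>} \<Longrightarrow> u t = S t u0 + integral {0..t} (\<lambda>s. S (t - s) (F s (u s)))"
    and u0: "0 \<le> u0"
  shows "\<And>t. t \<in> {0..\<tau>} \<Longrightarrow> 0 \<le> u t"
proof -
  define p where "p s = sup (u s) 0" for s
  define a where "a s = norm (u s - p s)" for s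
  have pc: "continuous_on {0..\<tau>} p" unfolding p_def
    by (rule continuous_on_compose2[OF cont_pos_part[of UNIV] uc]) auto
  have ac: "continuous_on {0..\<tau>} a" unfolding a_def by (intro continuous_intros uc pc)
  have pr: "norm (p s) \<le> r" if "s \<in> {0..\<tau>}" for s
    using norm_pos_part_le[of "u s"] ur[OF that] unfolding p_def by linarith
  have p0: "0 \<le> p s" for s unfolding p_def by simp
  have fuc: "continuous_on {0..\<tau>} (\<lambda>s. F s (u s))" by (rule Fc[OF uc])
  have fpc: "continuous_on {0..\<tau>} (\<lambda>s. F s (p s))" by (rule Fc[OF pc])
  define K where "K = M * (L + \<gamma>) + 1"
  have "0 \<le> M * (L + \<gamma>)" using M(1) L(1) \<gamma>(1) by simp
  then have K: "K > 0" unfolding K_def by linarith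
  have key: "a t \<le> 0 + K * integral {0..t} a" if t: "t \<in> {0..\<tau>}" for t
  proof -
    have sub: "{0..t} \<subseteq> {0..\<tau>}" using t by auto
    define hu where "hu s = F s (u s) + \<gamma> *\<^sub>R u s" for s
    define hp where "hp s = F s (p s) + \<gamma> *\<^sub>R p s" for s
    have huc: "continuous_on {0..t} hu" unfolding hu_def
      by (intro continuous_intros continuous_on_subset[OF fuc sub] continuous_on_subset[OF uc sub])
    have hpc: "continuous_on {0..t} hp" unfolding hp_def
      by (intro continuous_intros continuous_on_subset[OF fpc sub] continuous_on_subset[OF pc sub])
    define \<Phi> where "\<Phi> = exp (- \<gamma> * t) *\<^sub>R S t u0 + integral {0..t} (\<lambda>s. exp (- \<gamma> * (t - s)) *\<^sub>R S (t - s) (hp s))"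
    have \<Phi>0: "0 \<le> \<Phi>"
    proof -
      have "0 \<le> exp (- \<gamma> * t) *\<^sub>R S t u0" using Spos[of t u0] t u0 by (intro scaleR_nonneg_nonneg) auto
      moreover have "0 \<le> integral {0..t} (\<lambda>s. exp (- \<gamma> * (t - s)) *\<^sub>R S (t - s) (hp s))"
      proof (rule integral_nonneg_bl)
        fix s assume s: "s \<in> {0..t}"
        then have "0 \<le> hp s" unfolding hp_def using \<gamma>(2)[OF p0 pr] sub by auto
        then show "0 \<le> exp (- \<gamma> * (t - s)) *\<^sub>R S (t - s) (hp s)"
          using Spos[of "t - s" "hp s"] s by (intro scaleR_nonneg_nonneg) auto
      qed
      ultimately show ?thesis unfolding \<Phi>_def by (rule add_nonneg_nonneg)
    qed
    have ueq: "u t = exp (- \<gamma> * t) *\<^sub>R S t u0 + integral {0..t} (\<lambda>s. exp (- \<gamma> * (t - s)) *\<^sub>R S (t - s) (hu s))"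
      unfolding hu_def by (rule shifted_formula[OF c0 fuc mild t])
    have iu: "(\<lambda>s. exp (- \<gamma> * (t - s)) *\<^sub>R S (t - s) (hu s)) integrable_on {0..t}"
      by (rule integrable_continuous_interval exp_conv_cont[OF c0 huc])+
    have ip: "(\<lambda>s. exp (- \<gamma> * (t - s)) *\<^sub>R S (t - s) (hp s)) integrable_on {0..t}"
      by (rule integrable_continuous_interval exp_conv_cont[OF c0 hpc])+
    have ia: "a integrable_on {0..t}"
      by (rule integrable_continuous_interval continuous_on_subset[OF ac sub])+
    have "u t - \<Phi> = integral {0..t} (\<lambda>s. exp (- \<gamma> * (t - s)) *\<^sub>R S (t - s) (hu s)) - integral {0..t} (\<lambda>s. exp (- \<gamma> * (t - s)) *\<^sub>R S (t - s) (hp s))"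
      unfolding \<Phi>_def by (subst ueq) simp
    also have "\<dots> = integral {0..t} (\<lambda>s. exp (- \<gamma> * (t - s)) *\<^sub>R S (t - s) (hu s) - exp (- \<gamma> * (t - s)) *\<^sub>R S (t - s) (hp s))"
      by (rule integral_diff[OF iu ip, symmetric])
    also have "norm \<dots> \<le> integral {0..t} (\<lambda>s. (M * (L + \<gamma>)) * a s)"
    proof (rule Henstock_Kurzweil_Integration.integral_norm_bound_integral)
      show "(\<lambda>s. exp (- \<gamma> * (t - s)) *\<^sub>R S (t - s) (hu s) - exp (- \<gamma> * (t - s)) *\<^sub>R S (t - s) (hp s)) integrable_on {0..t}"
        by (rule integrable_diff[OF iu ip])
      show "(\<lambda>s. (M * (L + \<gamma>)) * a s) integrable_on {0..t}"
        using integrable_on_cmult_left[OF ia, of "M * (L + \<gamma>)"] by simp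
      fix s assume s: "s \<in> {0..t}"
      then have s': "s \<in> {0..\<tau>}" "t - s \<in> {0..\<tau>}" using sub t by auto
      have "exp (- \<gamma> * (t - s)) *\<^sub>R S (t - s) (hu s) - exp (- \<gamma> * (t - s)) *\<^sub>R S (t - s) (hp s)
          = exp (- \<gamma> * (t - s)) *\<^sub>R S (t - s) (hu s - hp s)"
      proof -
        have d: "S (t - s) (hu s - hp s) = S (t - s) (hu s) - S (t - s) (hp s)"
          using c0_diff[OF c0, of "t - s"] s by auto
        show ?thesis unfolding d by (simp add: scaleR_diff_right)
      qed
      also have "norm \<dots> = exp (- \<gamma> * (t - s)) * norm (S (t - s) (hu s - hp s))" by simp
      also have "\<dots> \<le> 1 * (M * norm (hu s - hp s))"
      proof (rule mult_mono)
        show "exp (- \<gamma> * (t - s)) \<le> 1" using s \<gamma> by (simp add: mult_nonneg_nonneg)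
        show "norm (S (t - s) (hu s - hp s)) \<le> M * norm (hu s - hp s)" by (rule M(2)[OF s'(2)])
      qed auto
      also have "norm (hu s - hp s) \<le> (L + \<gamma>) * a s"
      proof -
        have "hu s - hp s = (F s (u s) - F s (p s)) + \<gamma> *\<^sub>R (u s - p s)"
          unfolding hu_def hp_def by (simp add: algebra_simps)
        then have "norm (hu s - hp s) \<le> norm (F s (u s) - F s (p s)) + norm (\<gamma> *\<^sub>R (u s - p s))"
          by (metis norm_triangle_ineq)
        also have "\<dots> \<le> L * a s + \<gamma> * a s"
          using L(2)[OF s'(1) ur[OF s'(1)] pr[OF s'(1)]] \<gamma> unfolding a_def by simp
        finally show ?thesis by (simp add: algebra_simps)
      qed
      then have "1 * (M * norm (hu s - hp s)) \<le> M * ((L + \<gamma>) * a s)" using M by simp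
      finally show "norm (exp (- \<gamma> * (t - s)) *\<^sub>R S (t - s) (hu s) - exp (- \<gamma> * (t - s)) *\<^sub>R S (t - s) (hp s))
          \<le> M * (L + \<gamma>) * a s" by (simp add: mult.assoc)
    qed
    also have "\<dots> = M * (L + \<gamma>) * integral {0..t} a" by simp
    also have "\<dots> \<le> K * integral {0..t} a"
    proof (rule mult_right_mono)
      show "M * (L + \<gamma>) \<le> K" unfolding K_def by simp
      show "0 \<le> integral {0..t} a" by (rule integral_nonneg[OF ia]) (simp add: a_def)
    qed
    finally have "norm (u t - \<Phi>) \<le> K * integral {0..t} a" .
    moreover have "a t \<le> norm (u t - \<Phi>)" unfolding a_def p_def by (rule dist_cone[OF \<Phi>0])
    ultimately show ?thesis by simp
  qed
  fix t assume t: "t \<in> {0..\<tau>}"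
  have "a t \<le> 0 * exp (K * t)" by (rule gronwall0[OF K ac key t])
  then have "a t = 0" unfolding a_def by simp
  then have "u t = sup (u t) 0" unfolding a_def p_def by simp
  then show "0 \<le> u t" by (metis sup_ge2)
qed


lemma estimate_lemma:
  fixes S :: "real \<Rightarrow> 'a::banach_lattice \<Rightarrow> 'a" and F :: "real \<Rightarrow> 'a \<Rightarrow> 'a" and \<phi> :: "'a \<Rightarrow> real"
  assumes c0: "c0_semigroup S"
    and uc: "continuous_on {0..\<tau>} u"
    and upos: "\<And>t. t \<in> {0..\<tau>} \<Longrightarrow> 0 \<le> u t"
    and fuc: "continuous_on {0..\<tau>} (\<lambda>s. F s (u s))"
    and \<gamma>: "\<gamma>0 \<ge> 0" "\<And>s. s \<in> {0..\<tau>} \<Longrightarrow> 0 \<le> F s (u s) + \<gamma>0 *\<^sub>R u s"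
    and mild: "\<And>t. t \<in> {0..\<tau>} \<Longrightarrow> u t = S t u0 + integral {0..t} (\<lambda>s. S (t - s) (F s (u s)))"
    and phi_lin: "bounded_linear \<phi>"
    and phi_S: "\<forall>f t. 0 \<le> f \<longrightarrow> 0 \<le> t \<longrightarrow> \<phi> (S t f) \<le> \<phi> f"
    and u0: "0 \<le> u0"
    and nu: "\<forall>t\<in>{0..\<tau>}. \<phi> (F t (u t)) \<le> \<nu> * \<phi> (u t)"
  shows "\<forall>t\<in>{0..\<tau>}. \<phi> (u t) \<le> \<phi> u0 * exp (\<nu> * t)"
proof
  define \<gamma>1 where "\<gamma>1 = \<gamma>0 + \<bar>\<nu>\<bar> + 1"
  define K where "K = \<nu> + \<gamma>1"
  have K: "K > 0" unfolding K_def \<gamma>1_def using \<gamma>(1) by linarith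
  define w where "w s = F s (u s) + \<gamma>1 *\<^sub>R u s" for s
  have w0: "0 \<le> w s" if s: "s \<in> {0..\<tau>}" for s
  proof -
    have "w s = (F s (u s) + \<gamma>0 *\<^sub>R u s) + (\<gamma>1 - \<gamma>0) *\<^sub>R u s"
      unfolding w_def by (simp add: algebra_simps)
    moreover have "0 \<le> (\<gamma>1 - \<gamma>0) *\<^sub>R u s" using upos[OF s] unfolding \<gamma>1_def by (intro scaleR_nonneg_nonneg) auto
    ultimately show ?thesis using \<gamma>(2)[OF s] by simp
  qed
  have phic: "continuous_on A \<phi>" for A by (rule linear_continuous_on[OF phi_lin])
  have phi_add: "\<phi> (x + y) = \<phi> x + \<phi> y" for x y using phi_lin by (simp add: linear_add bounded_linear.linear)
  have phi_scale: "\<phi> (c *\<^sub>R x) = c * \<phi> x" for c x using phi_lin by (simp add: linear_scale bounded_linear.linear)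
  have phiw: "\<phi> (w s) \<le> K * \<phi> (u s)" if s: "s \<in> {0..\<tau>}" for s
    using nu s unfolding w_def K_def by (simp add: phi_add phi_scale algebra_simps)
  define b where "b s = exp (\<gamma>1 * s) * \<phi> (u s)" for s
  have bc: "continuous_on {0..\<tau>} b" unfolding b_def
    by (intro continuous_intros continuous_on_compose2[OF phic uc]) auto
  have key: "b t \<le> \<phi> u0 + K * integral {0..t} b" if t: "t \<in> {0..\<tau>}" for t
  proof -
    have sub: "{0..t} \<subseteq> {0..\<tau>}" using t by auto
    have wc: "continuous_on {0..t} w" unfolding w_def
      by (intro continuous_intros continuous_on_subset[OF fuc sub] continuous_on_subset[OF uc sub])
    have ueq: "u t = exp (- \<gamma>1 * t) *\<^sub>R S t u0 + integral {0..t} (\<lambda>s. exp (- \<gamma>1 * (t - s)) *\<^sub>R S (t - s) (w s))"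
      unfolding w_def by (rule shifted_formula[OF c0 fuc mild t])
    have i1: "(\<lambda>s. exp (- \<gamma>1 * (t - s)) *\<^sub>R S (t - s) (w s)) integrable_on {0..t}"
      by (rule integrable_continuous_interval exp_conv_cont[OF c0 wc])+
    have c2: "continuous_on {0..t} (\<lambda>s. \<phi> (exp (- \<gamma>1 * (t - s)) *\<^sub>R S (t - s) (w s)))"
      by (rule continuous_on_compose2[OF phic exp_conv_cont[OF c0 wc]]) auto
    have c3: "continuous_on {0..t} (\<lambda>s. exp (- \<gamma>1 * (t - s)) * (K * \<phi> (u s)))"
      by (intro continuous_intros continuous_on_compose2[OF phic continuous_on_subset[OF uc sub]]) auto
    have "\<phi> (u t) = exp (- \<gamma>1 * t) * \<phi> (S t u0) + integral {0..t} (\<phi> \<circ> (\<lambda>s. exp (- \<gamma>1 * (t - s)) *\<^sub>R S (t - s) (w s)))"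
      by (subst ueq) (simp only: phi_add phi_scale integral_linear[OF i1 phi_lin])
    also have "\<dots> \<le> exp (- \<gamma>1 * t) * \<phi> u0 + integral {0..t} (\<lambda>s. exp (- \<gamma>1 * (t - s)) * (K * \<phi> (u s)))"
    proof (rule add_mono)
      show "exp (- \<gamma>1 * t) * \<phi> (S t u0) \<le> exp (- \<gamma>1 * t) * \<phi> u0"
        using phi_S u0 t by (intro mult_left_mono) auto
      show "integral {0..t} (\<phi> \<circ> (\<lambda>s. exp (- \<gamma>1 * (t - s)) *\<^sub>R S (t - s) (w s)))
          \<le> integral {0..t} (\<lambda>s. exp (- \<gamma>1 * (t - s)) * (K * \<phi> (u s)))"
      proof (rule integral_le)
        show "(\<phi> \<circ> (\<lambda>s. exp (- \<gamma>1 * (t - s)) *\<^sub>R S (t - s) (w s))) integrable_on {0..t}"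
          using integrable_continuous_interval[OF c2] by (simp add: o_def)
        show "(\<lambda>s. exp (- \<gamma>1 * (t - s)) * (K * \<phi> (u s))) integrable_on {0..t}"
          by (rule integrable_continuous_interval[OF c3])
        fix s assume s: "s \<in> {0..t}"
        then have s': "s \<in> {0..\<tau>}" using sub by auto
        have "\<phi> (S (t - s) (w s)) \<le> \<phi> (w s)" using phi_S w0[OF s'] s by auto
        also have "\<dots> \<le> K * \<phi> (u s)" by (rule phiw[OF s'])
        finally show "(\<phi> \<circ> (\<lambda>s. exp (- \<gamma>1 * (t - s)) *\<^sub>R S (t - s) (w s))) s \<le> exp (- \<gamma>1 * (t - s)) * (K * \<phi> (u s))"
          by (simp add: phi_scale)
      qed
    qed
    finally have le: "\<phi> (u t) \<le> exp (- \<gamma>1 * t) * \<phi> u0 + integral {0..t} (\<lambda>s. exp (- \<gamma>1 * (t - s)) * (K * \<phi> (u s)))" .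
    have "b t = exp (\<gamma>1 * t) * \<phi> (u t)" by (simp add: b_def)
    also have "\<dots> \<le> exp (\<gamma>1 * t) * (exp (- \<gamma>1 * t) * \<phi> u0 + integral {0..t} (\<lambda>s. exp (- \<gamma>1 * (t - s)) * (K * \<phi> (u s))))"
      by (rule mult_left_mono[OF le]) simp
    also have "\<dots> = \<phi> u0 + integral {0..t} (\<lambda>s. exp (\<gamma>1 * t) * (exp (- \<gamma>1 * (t - s)) * (K * \<phi> (u s))))"
    proof -
      have e1: "exp (\<gamma>1 * t) * (exp (- \<gamma>1 * t) * \<phi> u0) = \<phi> u0"
        by (simp add: mult.assoc[symmetric] exp_add[symmetric])
      show ?thesis
        unfolding distrib_left e1 integral_mult[OF integrable_continuous_interval[OF c3]] ..
    qed
    also have "integral {0..t} (\<lambda>s. exp (\<gamma>1 * t) * (exp (- \<gamma>1 * (t - s)) * (K * \<phi> (u s)))) = integral {0..t} (\<lambda>s. K * b s)"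
    proof (rule integral_cong)
      fix s
      have "exp (\<gamma>1 * t) * exp (- \<gamma>1 * (t - s)) = exp (\<gamma>1 * s)"
        by (simp add: exp_add[symmetric] algebra_simps)
      then show "exp (\<gamma>1 * t) * (exp (- \<gamma>1 * (t - s)) * (K * \<phi> (u s))) = K * b s"
        unfolding b_def by (metis mult.assoc mult.left_commute)
    qed
    also have "\<dots> = K * integral {0..t} b"
      by (rule integral_mult[symmetric], rule integrable_continuous_interval, rule continuous_on_subset[OF bc sub])
    finally show ?thesis .
  qed
  fix t assume t: "t \<in> {0..\<tau>}"
  have "b t \<le> \<phi> u0 * exp (K * t)" by (rule gronwall0[OF K bc key t])
  then have "exp (\<gamma>1 * t) * \<phi> (u t) \<le> exp (\<gamma>1 * t) * (\<phi> u0 * exp (\<nu> * t))"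
    unfolding b_def K_def by (simp add: distrib_right exp_add algebra_simps)
  then show "\<phi> (u t) \<le> \<phi> u0 * exp (\<nu> * t)" by simp
qed


theorem proposition3p14:
  fixes T :: ereal
    and D :: "'a::banach_lattice set"
    and G :: "'a \<Rightarrow> 'a"
    and S :: "real \<Rightarrow> 'a \<Rightarrow> 'a"
    and \<eta> :: "real \<Rightarrow> real"
    and F :: "real \<Rightarrow> 'a \<Rightarrow> 'a"
    and \<phi> :: "'a \<Rightarrow> real"
    and u0 :: 'a
    and u :: "real \<Rightarrow> 'a"
    and tmax :: ereal
    and \<tau> :: real
    and \<nu> :: real
  assumes T_pos: "0 < T"
    and gen: "generates_c0 D G S"
    and eta_pos: "\<forall>\<delta>>0. \<eta> \<delta> > 0"
    and eta_lim: "(\<eta> \<longlongrightarrow> 0) (at_right 0)"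
    and eta_bound: "\<forall>s0 s1 \<psi>. 0 \<le> s0 \<longrightarrow> s0 < s1 \<longrightarrow> continuous_on {s0..s1} \<psi> \<longrightarrow>
        norm (integral {s0..s1} (\<lambda>s. S (s1 - s) (\<psi> s)))
          \<le> \<eta> (s1 - s0) * (SUP s\<in>{s0..s1}. norm (\<psi> s))"
    and F_cont: "continuous_on (Ico0 T \<times> UNIV) (\<lambda>(t, x). F t x)"
    and F_lip: "lipschitz_bounded_uniform T F"
    and shifted_pos: "\<forall>\<gamma>\<ge>0. \<exists>P. generates_c0 D (\<lambda>x. G x - \<gamma> *\<^sub>R x) P \<and> positive_semigroup P"
    and F_quasipos: "\<forall>\<tau>'\<in>Ico0 T. \<forall>r>0. \<exists>\<gamma>\<ge>0. \<forall>v t. 0 \<le> v \<longrightarrow> norm v \<le> r \<longrightarrow> t \<in> {0..\<tau>'} \<longrightarrow>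
        0 \<le> F t v + \<gamma> *\<^sub>R v"
    and phi_lin: "bounded_linear \<phi>"
    and phi_pos: "\<forall>f. 0 \<le> f \<longrightarrow> 0 \<le> \<phi> f"
    and phi_S: "\<forall>f t. 0 \<le> f \<longrightarrow> 0 \<le> t \<longrightarrow> \<phi> (S t f) \<le> \<phi> f"
    and u0_pos: "0 \<le> u0"
    and u_max: "maximal_mild_solution T S F u0 tmax u"
    and tau: "0 < \<tau>" "ereal \<tau> < tmax"
    and nu: "\<forall>t\<in>{0..\<tau>}. \<phi> (F t (u t)) \<le> \<nu> * \<phi> (u t)"
  shows "\<forall>t\<in>{0..\<tau>}. \<phi> (u t) \<le> \<phi> u0 * exp (\<nu> * t)"
proof -
  have c0: "c0_semigroup S" and genS: "is_generator S D G" using gen unfolding generates_c0_def by auto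
  have "mild_solution T S F u0 tmax u" using u_max unfolding maximal_mild_solution_def by auto
  then have tT: "tmax \<le> T" and ucI: "continuous_on (Ico0 tmax) u"
    and mildI: "\<And>t. t \<in> Ico0 tmax \<Longrightarrow> u t = S t u0 + integral {0..t} (\<lambda>s. S (t - s) (F s (u s)))"
    unfolding mild_solution_def by auto
  have sub: "{0..\<tau>} \<subseteq> Ico0 tmax"
  proof
    fix t assume t: "t \<in> {0..\<tau>}"
    then have "ereal t \<le> ereal \<tau>" by simp
    then have "ereal t < tmax" using tau(2) by (rule order.strict_trans1)
    then show "t \<in> Ico0 tmax" using t unfolding Ico0_def by auto
  qed
  have subT: "Ico0 tmax \<subseteq> Ico0 T" using tT unfolding Ico0_def by (auto intro: order.strict_trans2)
  have "\<tau> \<in> {0..\<tau>}" using tau(1) by simp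
  then have \<tau>T: "\<tau> \<in> Ico0 T" using sub subT by blast
  have uc: "continuous_on {0..\<tau>} u" by (rule continuous_on_subset[OF ucI sub])
  have mild: "\<And>t. t \<in> {0..\<tau>} \<Longrightarrow> u t = S t u0 + integral {0..t} (\<lambda>s. S (t - s) (F s (u s)))"
    using mildI sub by auto
  have Fc: "continuous_on {0..\<tau>} (\<lambda>s. F s (w s))" if w: "continuous_on {0..\<tau>} w" for w
  proof -
    have "continuous_on {0..\<tau>} (\<lambda>s. (\<lambda>(t, x). F t x) (s, w s))"
      by (rule continuous_on_compose2[OF F_cont]) (use sub subT in \<open>auto intro!: continuous_intros w\<close>)
    then show ?thesis by simp
  qed
  have fuc: "continuous_on {0..\<tau>} (\<lambda>s. F s (u s))" by (rule Fc[OF uc])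
  obtain R where R: "\<And>t. t \<in> {0..\<tau>} \<Longrightarrow> norm (u t) \<le> R"
  proof -
    have "compact (u ` {0..\<tau>})" by (rule compact_continuous_image[OF uc]) simp
    then obtain R where "\<forall>y\<in>u ` {0..\<tau>}. norm y \<le> R" using compact_imp_bounded bounded_iff by metis
    then have "\<And>t. t \<in> {0..\<tau>} \<Longrightarrow> norm (u t) \<le> R" by blast
    then show ?thesis by (rule that)
  qed
  define r where "r = \<bar>R\<bar> + 1"
  have r: "r > 0" unfolding r_def by simp
  have ur: "\<And>t. t \<in> {0..\<tau>} \<Longrightarrow> norm (u t) \<le> r" using R unfolding r_def by fastforce
  obtain \<gamma>0 where \<gamma>0: "\<gamma>0 \<ge> 0" "\<And>v t. 0 \<le> v \<Longrightarrow> norm v \<le> r \<Longrightarrow> t \<in> {0..\<tau>} \<Longrightarrow> 0 \<le> F t v + \<gamma>0 *\<^sub>R v"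
    using F_quasipos \<tau>T r by blast
  obtain L where L: "\<And>t f g. t \<in> {0..\<tau>} \<Longrightarrow> norm f \<le> r \<Longrightarrow> norm g \<le> r \<Longrightarrow> norm (F t f - F t g) \<le> L * norm (f - g)"
    using F_lip \<tau>T r unfolding lipschitz_bounded_uniform_def by blast
  have L': "norm (F t f - F t g) \<le> \<bar>L\<bar> * norm (f - g)" if "t \<in> {0..\<tau>}" "norm f \<le> r" "norm g \<le> r" for t f g
  proof -
    have "L * norm (f - g) \<le> \<bar>L\<bar> * norm (f - g)" by (intro mult_right_mono) auto
    then show ?thesis using L[OF that] by linarith
  qed
  obtain M where M: "M > 0" "\<And>t x. t \<in> {0..\<tau>} \<Longrightarrow> norm (S t x) \<le> M * norm x"
    using c0_local_bound[OF c0, of \<tau>] by blast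
  have Spos: "\<And>t x. t \<ge> 0 \<Longrightarrow> 0 \<le> x \<Longrightarrow> 0 \<le> S t x"
    using S_positive[OF gen shifted_pos] by blast
  have upos: "\<And>t. t \<in> {0..\<tau>} \<Longrightarrow> 0 \<le> u t"
    by (rule positivity_lemma[OF c0 Spos M uc ur Fc _ L' \<gamma>0 mild u0_pos]) auto
  have q: "\<And>s. s \<in> {0..\<tau>} \<Longrightarrow> 0 \<le> F s (u s) + \<gamma>0 *\<^sub>R u s"
    using \<gamma>0(2) upos ur by blast
  show ?thesis by (rule estimate_lemma[where F = F and u = u, OF c0 uc upos fuc \<gamma>0(1) q mild phi_lin phi_S u0_pos nu])
qed


end
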